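(* Let $T$ be a finite tree and let $P=p_0p_1\dots p_k$ ($k\ge1$) be a path in $T$ such that each of $p_1,\dots,p_{k-1}$ has degree $2$ in $T$. Let $B$ be the vertex set of the component containing $p_k$ of the graph obtained from $T$ by deleting the edges of $P$. Let $T'$ be the tree obtained from $T$ by deleting all edges between $p_k$ and $\Gamma(p_k)\setminus\{p_{k-1}\}$ and adding the edges between $p_0$ and $\Gamma(p_k)\setminus\{p_{k-1}\}$ instead. If $k$ is even, then for every $\ell\ge1$, \[\omega_{\ell}(p_0,T[B\cup P])-\omega_{\ell}(p_0,P)\leq \omega_{\ell}(p_0,T'[B\cup P])-\omega_{\ell}(p_0,P).\]
   Context: $\Gamma(v)$ is the set of neighbours of $v$ in $T$. For a graph $G$ containing the vertices of $B$ and $P$, $G[B\cup P]$ is the subgraph of $G$ induced by $B\cup\{p_0,\dots,p_k\}$. For a graph $G$, a vertex $x$ and $\ell\ge1$, $\omega_\ell(x,G)$ is the number of walks of length $\ell$ in $G$ starting at $x$. $P$ is regarded as a graph (the path). *)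

theory Defs
  imports Main
begin

definition simple_graph :: "'a set \<Rightarrow> 'a set set \<Rightarrow> bool" where
  "simple_graph V E \<longleftrightarrow> finite V \<and> (\<forall>e\<in>E. \<exists>u v. e = {u, v} \<and> u \<noteq> v \<and> u \<in> V \<and> v \<in> V)"

definition adj :: "'a set set \<Rightarrow> 'a \<Rightarrow> 'a \<Rightarrow> bool" where
  "adj E u v \<longleftrightarrow> u \<noteq> v \<and> {u, v} \<in> E"

definition nbrs :: "'a set set \<Rightarrow> 'a \<Rightarrow> 'a set" where
  "nbrs E v = {u. adj E v u}"

definition degree :: "'a set set \<Rightarrow> 'a \<Rightarrow> nat" where
  "degree E v = card (nbrs E v)"

definition connected_graph :: "'a set \<Rightarrow> 'a set set \<Rightarrow> bool" where
  "connected_graph V E \<longleftrightarrow> (\<forall>u\<in>V. \<forall>v\<in>V. (adj E)\<^sup>*\<^sup>* u v)"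

definition is_cycle :: "'a set set \<Rightarrow> 'a list \<Rightarrow> bool" where
  "is_cycle E cs \<longleftrightarrow> length cs \<ge> 3 \<and> distinct cs \<and>
     (\<forall>i. Suc i < length cs \<longrightarrow> adj E (cs ! i) (cs ! Suc i)) \<and> adj E (last cs) (hd cs)"

definition is_tree :: "'a set \<Rightarrow> 'a set set \<Rightarrow> bool" where
  "is_tree V E \<longleftrightarrow> simple_graph V E \<and> V \<noteq> {} \<and> connected_graph V E \<and> \<not> (\<exists>cs. is_cycle E cs)"

definition is_path :: "'a set set \<Rightarrow> 'a list \<Rightarrow> bool" where
  "is_path E ps \<longleftrightarrow> ps \<noteq> [] \<and> distinct ps \<and> (\<forall>i. Suc i < length ps \<longrightarrow> adj E (ps ! i) (ps ! Suc i))"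

definition path_edges :: "'a list \<Rightarrow> 'a set set" where
  "path_edges ps = {{ps ! i, ps ! Suc i} | i. Suc i < length ps}"

definition induced_edges :: "'a set set \<Rightarrow> 'a set \<Rightarrow> 'a set set" where
  "induced_edges E S = {e \<in> E. e \<subseteq> S}"

definition component :: "'a set \<Rightarrow> 'a set set \<Rightarrow> 'a \<Rightarrow> 'a set" where
  "component V E v = {u \<in> V. (adj E)\<^sup>*\<^sup>* v u}"

definition walks :: "'a set set \<Rightarrow> 'a \<Rightarrow> nat \<Rightarrow> 'a list set" where
  "walks E x l = {ws. length ws = Suc l \<and> hd ws = x \<and> (\<forall>i<l. adj E (ws ! i) (ws ! Suc i))}"

definition num_walks :: "nat \<Rightarrow> 'a \<Rightarrow> 'a set set \<Rightarrow> nat" where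
  "num_walks l x E = card (walks E x l)"

end

theory Submission imports Defs begin
lemma succ_nth: "successively R xs \<longleftrightarrow> (\<forall>i. Suc i < length xs \<longrightarrow> R (xs!i) (xs!Suc i))"
proof (induction R xs rule: successively.induct)
  case (3 P x y xs)
  show ?case
  proof
    assume "successively P (x # y # xs)"
    then show "\<forall>i. Suc i < length (x # y # xs) \<longrightarrow> P ((x # y # xs) ! i) ((x # y # xs) ! Suc i)"
      using 3 by (auto simp: nth_Cons split: nat.splits)
  next
    assume h: "\<forall>i. Suc i < length (x # y # xs) \<longrightarrow> P ((x # y # xs) ! i) ((x # y # xs) ! Suc i)"
    have "P x y" using h[rule_format, of 0] by simp
    moreover have "\<forall>i. Suc i < length (y # xs) \<longrightarrow> P ((y # xs) ! i) ((y # xs) ! Suc i)"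
      using h by (metis Suc_less_eq length_Cons nth_Cons_Suc)
    ultimately show "successively P (x # y # xs)" using 3 by simp
  qed
qed auto

lemma rtranclp_distinct_chain:
  "R\<^sup>*\<^sup>* a b \<Longrightarrow> \<exists>xs. xs \<noteq> [] \<and> hd xs = a \<and> last xs = b \<and> distinct xs \<and> successively R xs"
proof (induction rule: converse_rtranclp_induct)
  case base
  then show ?case by (intro exI[of _ "[b]"]) auto
next
  case (step a c)
  then obtain xs where xs: "xs \<noteq> []" "hd xs = c" "last xs = b" "distinct xs" "successively R xs" by blast
  show ?case
  proof (cases "a \<in> set xs")
    case True
    then obtain ys zs where sp: "xs = ys @ a # zs" by (meson split_list)
    have "last (a # zs) = b" using xs(3) sp by simp
    moreover have "distinct (a # zs)" using xs(4) sp by simp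
    moreover have "successively R (a # zs)" using xs(5) sp by (simp add: successively_append_iff)
    ultimately show ?thesis by (intro exI[of _ "a # zs"]) auto
  next
    case False
    have "successively R (a # xs)" using xs step(1) by (simp add: successively_Cons)
    then show ?thesis using xs False by (intro exI[of _ "a # xs"]) auto
  qed
qed

lemma in_set_take_nth: "x \<in> set (take n xs) \<longleftrightarrow> (\<exists>j<n. j < length xs \<and> xs!j = x)"
  by (auto simp: in_set_conv_nth)

lemma adj_sym: "adj F x y \<Longrightarrow> adj F y x" by (auto simp: adj_def insert_commute)
theorem corollary3:
  fixes V :: "'a set" and E :: "'a set set" and ps :: "'a list" and k :: nat and l :: nat
  assumes tree: "is_tree V E"
    and path: "is_path E ps" and set_ps: "set ps \<subseteq> V"
    and len: "length ps = Suc k" and k1: "k \<ge> 1"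
    and deg2: "\<forall>i. 1 \<le> i \<and> i \<le> k - 1 \<longrightarrow> degree E (ps ! i) = 2"
    and B_def: "B = component V (E - path_edges ps) (ps ! k)"
    and N_def: "N = nbrs E (ps ! k) - {ps ! (k - 1)}"
    and E'_def: "E' = (E - {{ps ! k, u} | u. u \<in> N}) \<union> {{ps ! 0, u} | u. u \<in> N}"
    and keven: "even k"
    and l1: "l \<ge> 1"
  shows "int (num_walks l (ps ! 0) (induced_edges E (B \<union> set ps))) - int (num_walks l (ps ! 0) (path_edges ps))
         \<le> int (num_walks l (ps ! 0) (induced_edges E' (B \<union> set ps))) - int (num_walks l (ps ! 0) (path_edges ps))"
proof -
  have sg: "simple_graph V E" and acyc: "\<not> (\<exists>cs. is_cycle E cs)" using tree by (auto simp: is_tree_def)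
  have finV: "finite V" using sg by (simp add: simple_graph_def)
  have adjV: "\<And>x y. adj E x y \<Longrightarrow> y \<in> V"
  proof -
    fix x y assume "adj E x y"
    then have "{x,y} \<in> E" by (simp add: adj_def)
    then obtain u v where "{x,y} = {u,v}" "u \<in> V" "v \<in> V" using sg by (auto simp: simple_graph_def)
    then show "y \<in> V" by (auto simp: doubleton_eq_iff)
  qed
  have dist: "distinct ps" using path by (simp add: is_path_def)
  have chain: "\<And>i. i < k \<Longrightarrow> adj E (ps!i) (ps!Suc i)" using path len by (simp add: is_path_def)
  have neq: "\<And>i j. i \<le> k \<Longrightarrow> j \<le> k \<Longrightarrow> (ps!i = ps!j) = (i = j)"
    using dist len by (simp add: nth_eq_iff_index_eq)
  have nb: "\<And>i. 0<i \<Longrightarrow> i<k \<Longrightarrow> nbrs E (ps!i) = {ps!(i-1), ps!Suc i}"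
  proof -
    fix i assume i: "0<i" "i<k"
    have fin: "finite (nbrs E (ps!i))" using adjV finV by (auto simp: nbrs_def intro: finite_subset)
    have "adj E (ps!(i-1)) (ps!i)" using chain[of "i-1"] i by simp
    then have a1: "adj E (ps!i) (ps!(i-1))" by (rule adj_sym)
    have a2: "adj E (ps!i) (ps!Suc i)" using chain i by simp
    have sub: "{ps!(i-1), ps!Suc i} \<subseteq> nbrs E (ps!i)" using a1 a2 by (simp add: nbrs_def)
    have "ps!(i-1) \<noteq> ps!Suc i" using neq[of "i-1" "Suc i"] i by simp
    then have c2: "card {ps!(i-1), ps!Suc i} = 2" by simp
    have "card (nbrs E (ps!i)) = 2" using deg2 i by (simp add: degree_def)
    then show "nbrs E (ps!i) = {ps!(i-1), ps!Suc i}" using card_subset_eq[OF fin sub] c2 by simp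
  qed
  have nbadj: "\<And>i y. 0<i \<Longrightarrow> i<k \<Longrightarrow> adj E (ps!i) y \<Longrightarrow> y = ps!(i-1) \<or> y = ps!Suc i"
  proof -
    fix i y assume "0<i" "i<k" "adj E (ps!i) y"
    then have "y \<in> nbrs E (ps!i)" by (simp add: nbrs_def)
    then show "y = ps!(i-1) \<or> y = ps!Suc i" using nb \<open>0<i\<close> \<open>i<k\<close> by auto
  qed
  have k2: "k \<ge> 2" using keven k1 by presburger
  have succ_ps: "successively (adj E) ps" using path by (simp add: is_path_def succ_nth)
  have last_ps: "last ps = ps!k" using len by (metis diff_Suc_1 last_conv_nth list.size(3) nat.distinct(1))
  have hd_ps: "hd ps = ps!0" using len by (metis hd_conv_nth list.size(3) nat.distinct(1))
  have no0k: "\<not> adj E (ps!0) (ps!k)"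
  proof
    assume "adj E (ps!0) (ps!k)"
    then have "adj E (last ps) (hd ps)" using last_ps hd_ps adj_sym by simp
    moreover have "length ps \<ge> 3" using len k2 by simp
    ultimately have "is_cycle E ps" using path unfolding is_cycle_def is_path_def by blast
    then show False using acyc by blast
  qed
  have padj: "\<And>i j. i \<le> k \<Longrightarrow> j \<le> k \<Longrightarrow> adj E (ps!i) (ps!j) \<Longrightarrow> j = Suc i \<or> i = Suc j"
  proof -
    fix i j assume ij: "i \<le> k" "j \<le> k" and a: "adj E (ps!i) (ps!j)"
    show "j = Suc i \<or> i = Suc j"
    proof (cases "0 < i \<and> i < k")
      case True
      then have "ps!j = ps!(i-1) \<or> ps!j = ps!Suc i" using nbadj a by blast
      then show ?thesis using neq[of j "i-1"] neq[of j "Suc i"] ij True by auto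
    next
      case F1: False
      show ?thesis
      proof (cases "0 < j \<and> j < k")
        case True
        then have "ps!i = ps!(j-1) \<or> ps!i = ps!Suc j" using nbadj adj_sym[OF a] by blast
        then show ?thesis using neq[of i "j-1"] neq[of i "Suc j"] ij True by auto
      next
        case False
        have "i \<noteq> j" using a by (auto simp: adj_def)
        then have "(i = 0 \<and> j = k) \<or> (i = k \<and> j = 0)" using F1 False ij by auto
        then show ?thesis using no0k a adj_sym by metis
      qed
    qed
  qed
  define PE where "PE = path_edges ps"
  have PE_sub: "\<And>e. e \<in> PE \<Longrightarrow> e \<subseteq> set ps"
    using len by (auto simp: PE_def path_edges_def)
  have isol: "\<And>i z. 0<i \<Longrightarrow> i<k \<Longrightarrow> \<not> adj (E - PE) (ps!i) z"
  proof
    fix i z assume i: "0<i" "i<k" and a: "adj (E - PE) (ps!i) z"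
    then have "adj E (ps!i) z" by (auto simp: adj_def)
    then have "z = ps!(i-1) \<or> z = ps!Suc i" using nbadj i by blast
    moreover have "{ps!i, ps!(i-1)} \<in> PE"
    proof -
      have "{ps!(i-1), ps!Suc (i-1)} \<in> PE" using i len unfolding PE_def path_edges_def by force
      then show ?thesis using i by (simp add: insert_commute)
    qed
    moreover have "{ps!i, ps!Suc i} \<in> PE" using i len unfolding PE_def path_edges_def by force
    ultimately show False using a by (auto simp: adj_def)
  qed
  have no0B: "\<And>y. y \<in> B \<Longrightarrow> y \<notin> set ps \<Longrightarrow> \<not> adj E (ps!0) y"
  proof
    fix y assume yB: "y \<in> B" and yn: "y \<notin> set ps" and a: "adj E (ps!0) y"
    let ?R = "adj (E - PE)"
    have r1: "?R\<^sup>*\<^sup>* (ps!k) y" using yB by (simp add: B_def component_def PE_def)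
    have "{y, ps!0} \<notin> PE" using PE_sub yn by blast
    then have "?R y (ps!0)" using a by (auto simp: adj_def insert_commute)
    then have "?R\<^sup>*\<^sup>* (ps!k) (ps!0)" using r1 by simp
    then obtain ys where ys: "ys \<noteq> []" "hd ys = ps!k" "last ys = ps!0" "distinct ys" "successively ?R ys"
      using rtranclp_distinct_chain by metis
    have k0: "ps!k \<noteq> ps!0" using neq[of k 0] k2 by simp
    obtain zs where yz: "ys = ps!k # zs" using ys(1,2) by (cases ys) auto
    have zne: "zs \<noteq> []" using yz ys(3) k0 by auto
    have lz: "last zs = ps!0" using yz ys(3) zne by simp
    have zsplit: "zs = butlast zs @ [ps!0]" using zne lz by (metis append_butlast_last_id)
    have dz: "distinct zs" and knz: "ps!k \<notin> set zs" using ys(4) yz by auto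
    have sE: "successively (adj E) ys" using ys(5) by (rule successively_mono) (auto simp: adj_def)
    have a_k_hd: "adj E (ps!k) (hd zs)" and sz: "successively (adj E) zs"
      using sE yz zne by (auto simp: successively_Cons)
    have sbz: "successively (adj E) (butlast zs)"
      and lastb: "butlast zs \<noteq> [] \<Longrightarrow> adj E (last (butlast zs)) (ps!0)"
      using sz zsplit by (metis successively_append_iff list.sel(1) list.distinct(1))+
    define cs where "cs = ps @ butlast zs"
    have z0: "ps!0 \<notin> set (butlast zs)" using dz zsplit by (metis distinct_append disjoint_iff list.set_intros(1))
    have zmid: "\<And>v i. v \<in> set zs \<Longrightarrow> 0 < i \<Longrightarrow> i < k \<Longrightarrow> v \<noteq> ps!i"
    proof
      fix v i assume v: "v \<in> set zs" and i: "0<i" "i<k" and vi: "v = ps!i"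
      obtain j where j: "j < length zs" "zs!j = v" using v by (auto simp: in_set_conv_nth)
      have "Suc j < length ys" using j yz by simp
      then have "?R (ys!j) (ys!Suc j)" using ys(5) succ_nth by metis
      then have "?R (ps!i) (ys!j)" using j yz vi adj_sym by simp
      then show False using isol i by blast
    qed
    have disj: "\<And>v. v \<in> set (butlast zs) \<Longrightarrow> v \<notin> set ps"
    proof
      fix v assume vb: "v \<in> set (butlast zs)" and vp: "v \<in> set ps"
      then have vz: "v \<in> set zs" by (meson in_set_butlastD)
      obtain i where i: "i < Suc k" "ps!i = v" using vp len by (auto simp: in_set_conv_nth)
      show False
      proof (cases "i = 0")
        case True then show False using z0 vb i by simp
      next
        case False
        show False
        proof (cases "i = k")
          case True then show False using knz vz i by simp
        next
          case False
          then show False using zmid[OF vz, of i] \<open>i \<noteq> 0\<close> i by simp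
        qed
      qed
    qed
    have dcs: "distinct cs" using dist dz disj by (auto simp: cs_def distinct_butlast)
    have scs: "successively (adj E) cs"
    proof -
      have "butlast zs \<noteq> [] \<Longrightarrow> hd (butlast zs) = hd zs" using zsplit by (metis hd_append2)
      then show ?thesis using succ_ps sbz a_k_hd last_ps unfolding cs_def successively_append_iff
        by (cases "butlast zs = []") auto
    qed
    have lcs: "adj E (last cs) (hd cs)"
    proof (cases "butlast zs = []")
      case True
      then have "zs = [ps!0]" using zsplit by simp
      then show ?thesis using True a_k_hd last_ps hd_ps len by (simp add: cs_def)
    next
      case False
      moreover have "ps \<noteq> []" using len by auto
      ultimately show ?thesis using lastb hd_ps by (simp add: cs_def)
    qed
    have "length cs \<ge> 3" using len k2 by (simp add: cs_def)
    then have "is_cycle E cs" using dcs scs lcs succ_nth unfolding is_cycle_def by blast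
    then show False using acyc by blast
  qed
  define m where "m = k div 2"
  have km: "k - m = m" "0 < m" "m < k" using keven k2 by (auto simp: m_def)
  define \<sigma> where "\<sigma> x = (case map_of (zip ps (rev ps)) x of None \<Rightarrow> x | Some y \<Rightarrow> y)" for x
  have \<sigma>_p: "\<And>i. i \<le> k \<Longrightarrow> \<sigma> (ps!i) = ps!(k-i)"
  proof -
    fix i assume i: "i \<le> k"
    have "map_of (zip ps (rev ps)) (ps!i) = Some (rev ps ! i)"
      using map_of_zip_nth[of ps "rev ps" i] dist len i by simp
    moreover have "rev ps ! i = ps!(k-i)" using len i by (simp add: rev_nth)
    ultimately show "\<sigma> (ps!i) = ps!(k-i)" by (simp add: \<sigma>_def)
  qed
  have \<sigma>_out: "\<And>x. x \<notin> set ps \<Longrightarrow> \<sigma> x = x"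
  proof -
    fix x assume "x \<notin> set ps"
    then have "map_of (zip ps (rev ps)) x = None" using map_of_zip_is_None[of ps "rev ps" x] by simp
    then show "\<sigma> x = x" unfolding \<sigma>_def by (simp del: map_of_zip_is_None)
  qed
  have \<sigma>\<sigma>: "\<And>x. \<sigma> (\<sigma> x) = x"
  proof -
    fix x show "\<sigma> (\<sigma> x) = x"
    proof (cases "x \<in> set ps")
      case True
      then obtain i where i: "i \<le> k" "x = ps!i" using len by (metis in_set_conv_nth less_Suc_eq_le)
      then show ?thesis using \<sigma>_p[of i] \<sigma>_p[of "k-i"] by simp
    qed (simp add: \<sigma>_out)
  qed
  have \<sigma>m: "\<And>x. (\<sigma> x = ps!m) = (x = ps!m)"
  proof -
    have fm: "\<sigma> (ps!m) = ps!m" using \<sigma>_p[of m] km by simp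
    fix x show "(\<sigma> x = ps!m) = (x = ps!m)" using fm \<sigma>\<sigma> by metis
  qed
  define S where "S = B \<union> set ps"
  define G where "G = induced_edges E S"
  define G' where "G' = induced_edges E' S"
  have adjG: "\<And>x y. adj G x y = (adj E x y \<and> x \<in> S \<and> y \<in> S)"
    by (auto simp: adj_def induced_edges_def G_def)
  have adjG': "\<And>x y. adj G' x y = (x \<noteq> y \<and> {x,y} \<in> E' \<and> x \<in> S \<and> y \<in> S)"
    by (auto simp: adj_def induced_edges_def G'_def)
  have psS: "\<And>i. i \<le> k \<Longrightarrow> ps!i \<in> S" using len by (auto simp: S_def)
  have pathG': "\<And>j. j < k \<Longrightarrow> adj G' (ps!j) (ps!Suc j)"
  proof -
    fix j assume j: "j < k"
    have a: "adj E (ps!j) (ps!Suc j)" using chain j by simp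
    have "{ps!j, ps!Suc j} \<notin> {{ps ! k, u} | u. u \<in> N}"
    proof
      assume "{ps!j, ps!Suc j} \<in> {{ps ! k, u} | u. u \<in> N}"
      then obtain u where u: "{ps!j, ps!Suc j} = {ps!k, u}" "u \<in> N" by blast
      have "ps!j \<noteq> ps!k" using neq[of j k] j by simp
      then have "ps!Suc j = ps!k" "u = ps!j" using u(1) by (auto simp: doubleton_eq_iff)
      then have "Suc j = k" using neq[of "Suc j" k] j by simp
      then have "j = k - 1" by simp
      then show False using u(2) \<open>u = ps!j\<close> by (simp add: N_def)
    qed
    then have "{ps!j, ps!Suc j} \<in> E'" using a by (simp add: E'_def adj_def)
    moreover have "ps!j \<in> S" "ps!Suc j \<in> S" using psS j by auto
    ultimately show "adj G' (ps!j) (ps!Suc j)" unfolding adjG' using a by (auto simp: adj_def)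
  qed
  have nbG: "\<And>j y. j < k \<Longrightarrow> adj G (ps!j) y \<Longrightarrow> y = ps!Suc j \<or> (0<j \<and> y = ps!(j-1))"
  proof -
    fix j y assume j: "j < k" and a: "adj G (ps!j) y"
    show "y = ps!Suc j \<or> (0<j \<and> y = ps!(j-1))"
    proof (cases "0 < j")
      case True then show ?thesis using nbadj j a adjG by blast
    next
      case False
      then have j0: "j = 0" by simp
      have aE: "adj E (ps!0) y" "y \<in> S" using a adjG j0 by auto
      show ?thesis
      proof (cases "y \<in> set ps")
        case True
        then obtain i where i: "i \<le> k" "y = ps!i" using len by (metis in_set_conv_nth less_Suc_eq_le)
        then have "i = Suc 0" using padj[of 0 i] aE by auto
        then show ?thesis using i j0 by simp
      next
        case False
        then have "y \<in> B" using aE by (simp add: S_def)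
        then show ?thesis using no0B False aE by blast
      qed
    qed
  qed
  have homL: "\<And>x y. adj G x y \<Longrightarrow> x \<in> set ps \<Longrightarrow> y \<notin> set ps \<Longrightarrow> adj G' (\<sigma> x) (\<sigma> y)"
  proof -
    fix x y assume a: "adj G x y" and x: "x \<in> set ps" and y: "y \<notin> set ps"
    obtain i where i: "i \<le> k" "x = ps!i" using x len by (metis in_set_conv_nth less_Suc_eq_le)
    have aE: "adj E (ps!i) y" "y \<in> S" using a adjG i by auto
    have yB: "y \<in> B" using aE y by (simp add: S_def)
    have ik: "i = k"
    proof (rule ccontr)
      assume "i \<noteq> k"
      show False
      proof (cases "i = 0")
        case True then show False using no0B yB y aE by blast
      next
        case False
        then have "y = ps!(i-1) \<or> y = ps!Suc i" using nbadj aE \<open>i \<noteq> k\<close> i by auto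
        then show False using y i \<open>i \<noteq> k\<close> len by auto
      qed
    qed
    have yN: "y \<in> N"
    proof -
      have "y \<noteq> ps!(k-1)" using y len by auto
      then show ?thesis using aE ik by (simp add: N_def nbrs_def)
    qed
    have "\<sigma> x = ps!0" using \<sigma>_p[of k] i ik by simp
    moreover have "\<sigma> y = y" using \<sigma>_out y by simp
    moreover have "{ps!0, y} \<in> E'" using yN by (auto simp: E'_def)
    moreover have "ps!0 \<noteq> y" using y len by auto
    moreover have "ps!0 \<in> S" using psS by simp
    ultimately show "adj G' (\<sigma> x) (\<sigma> y)" unfolding adjG' using aE by auto
  qed
  have hom: "\<And>x y. adj G x y \<Longrightarrow> adj G' (\<sigma> x) (\<sigma> y)"
  proof -
    fix x y assume a: "adj G x y"
    show "adj G' (\<sigma> x) (\<sigma> y)"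
    proof (cases "x \<in> set ps")
      case xT: True
      show ?thesis
      proof (cases "y \<in> set ps")
        case True
        obtain i where i: "i \<le> k" "x = ps!i" using xT len by (metis in_set_conv_nth less_Suc_eq_le)
        obtain j where j: "j \<le> k" "y = ps!j" using True len by (metis in_set_conv_nth less_Suc_eq_le)
        have "adj E (ps!i) (ps!j)" using a adjG i j by auto
        then have ij: "j = Suc i \<or> i = Suc j" using padj i j by blast
        have sx: "\<sigma> x = ps!(k-i)" "\<sigma> y = ps!(k-j)" using \<sigma>_p i j by auto
        show ?thesis
        proof (cases "j = Suc i")
          case True
          then have "adj G' (ps!(k-j)) (ps!Suc (k-j))" using pathG' j i by simp
          moreover have "Suc (k-j) = k-i" using True j by simp
          ultimately have "adj G' (\<sigma> y) (\<sigma> x)" using sx by metis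
          then show ?thesis by (rule adj_sym)
        next
          case False
          then have "i = Suc j" using ij by simp
          then have "adj G' (ps!(k-i)) (ps!Suc (k-i))" using pathG' j i by simp
          moreover have "Suc (k-i) = k-j" using \<open>i = Suc j\<close> i by simp
          ultimately show ?thesis using sx by metis
        qed
      next
        case False
        then show ?thesis using homL a xT by blast
      qed
    next
      case xF: False
      show ?thesis
      proof (cases "y \<in> set ps")
        case True
        then have "adj G' (\<sigma> y) (\<sigma> x)" using homL[OF adj_sym[OF a]] xF by blast
        then show ?thesis by (rule adj_sym)
      next
        case False
        have sx: "\<sigma> x = x" "\<sigma> y = y" using \<sigma>_out xF False by auto
        have aE: "adj E x y" "x \<in> S" "y \<in> S" using a adjG by auto
        have "{x,y} \<notin> {{ps ! k, u} | u. u \<in> N}"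
        proof
          assume "{x,y} \<in> {{ps ! k, u} | u. u \<in> N}"
          then have "ps!k \<in> {x,y}" by auto
          then show False using xF False len by auto
        qed
        then have "{x,y} \<in> E'" using aE by (auto simp: E'_def adj_def)
        then show ?thesis unfolding adjG' sx using aE by (auto simp: adj_def)
      qed
    qed
  qed
  have m0: "ps!0 \<noteq> ps!m" using neq[of 0 m] km by simp
  have prefix: "\<And>w i. w \<in> walks G (ps!0) l \<Longrightarrow> i \<le> l \<Longrightarrow> ps!m \<notin> set (take (Suc i) w) \<Longrightarrow> \<exists>j<m. w!i = ps!j"
  proof -
    fix w i assume w: "w \<in> walks G (ps!0) l"
    then have wl: "length w = Suc l" and wh: "hd w = ps!0" and ws: "\<And>i. i < l \<Longrightarrow> adj G (w!i) (w!Suc i)"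
      by (auto simp: walks_def)
    have w0: "w!0 = ps!0" using wl wh by (metis hd_conv_nth list.size(3) nat.distinct(1))
    show "i \<le> l \<Longrightarrow> ps!m \<notin> set (take (Suc i) w) \<Longrightarrow> \<exists>j<m. w!i = ps!j"
    proof (induction i)
      case 0 then show ?case using w0 km by auto
    next
      case (Suc i)
      have tk: "take (Suc (Suc i)) w = take (Suc i) w @ [w!Suc i]"
        using Suc.prems wl by (simp add: take_Suc_conv_app_nth)
      have n1: "ps!m \<notin> set (take (Suc i) w)" and n2: "w!Suc i \<noteq> ps!m" using Suc.prems tk by auto
      obtain j where j: "j < m" "w!i = ps!j" using Suc.IH Suc.prems n1 by auto
      have "adj G (ps!j) (w!Suc i)" using ws[of i] Suc.prems j by simp
      then have "w!Suc i = ps!Suc j \<or> (0<j \<and> w!Suc i = ps!(j-1))" using nbG j km by auto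
      then show ?case
      proof
        assume e: "w!Suc i = ps!Suc j"
        then have "Suc j \<noteq> m" using n2 by auto
        then have "Suc j < m" using j by simp
        then show ?case using e by blast
      next
        assume e: "0<j \<and> w!Suc i = ps!(j-1)"
        then have "j - 1 < m" using j by simp
        then show ?case using e by blast
      qed
    qed
  qed
  define C where "C w i = (ps!m \<in> set (take (Suc i) w))" for w i
  define \<psi> where "\<psi> w = map (\<lambda>i. if C w i then \<sigma> (w!i) else w!i) [0..<length w]" for w
  have \<psi>_len: "\<And>w. length (\<psi> w) = length w" by (simp add: \<psi>_def)
  have \<psi>_nth: "\<And>w i. i < length w \<Longrightarrow> \<psi> w ! i = (if C w i then \<sigma> (w!i) else w!i)" by (simp add: \<psi>_def)
  have \<psi>_pt: "\<And>w j. j < length w \<Longrightarrow> (\<psi> w ! j = ps!m) = (w!j = ps!m)"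
    using \<psi>_nth \<sigma>m by simp
  have C_pres: "\<And>w i. C (\<psi> w) i = C w i"
  proof -
    fix w i
    have "C (\<psi> w) i = (\<exists>j<Suc i. j < length w \<and> \<psi> w ! j = ps!m)" unfolding C_def in_set_take_nth \<psi>_len ..
    also have "\<dots> = (\<exists>j<Suc i. j < length w \<and> w ! j = ps!m)" using \<psi>_pt by blast
    also have "\<dots> = C w i" unfolding C_def in_set_take_nth ..
    finally show "C (\<psi> w) i = C w i" .
  qed
  have \<psi>\<psi>: "\<And>w. \<psi> (\<psi> w) = w"
  proof -
    fix w show "\<psi> (\<psi> w) = w"
      by (rule nth_equalityI) (auto simp: \<psi>_len \<psi>_nth C_pres \<sigma>\<sigma>)
  qed
  have inj: "inj_on \<psi> (walks G (ps!0) l)" by (metis inj_onI \<psi>\<psi>)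
  have fixm: "\<And>w i. i < length w \<Longrightarrow> w!i = ps!m \<Longrightarrow> \<psi> w ! i = w!i" using \<psi>_nth \<sigma>m by auto
  have maps: "\<And>w. w \<in> walks G (ps!0) l \<Longrightarrow> \<psi> w \<in> walks G' (ps!0) l"
  proof -
    fix w assume w: "w \<in> walks G (ps!0) l"
    then have wl: "length w = Suc l" and wh: "hd w = ps!0" and ws: "\<And>i. i < l \<Longrightarrow> adj G (w!i) (w!Suc i)"
      by (auto simp: walks_def)
    have w0: "w!0 = ps!0" using wl wh by (metis hd_conv_nth list.size(3) nat.distinct(1))
    have "\<psi> w ! 0 = w!0"
    proof (cases "C w 0")
      case True
      then have "w!0 = ps!m" using wl by (auto simp: C_def take_Suc_conv_app_nth)
      then show ?thesis using fixm wl by simp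
    qed (use \<psi>_nth wl in simp)
    then have h: "hd (\<psi> w) = ps!0" using w0 wl \<psi>_len by (metis hd_conv_nth list.size(3) nat.distinct(1))
    have st: "\<And>i. i < l \<Longrightarrow> adj G' (\<psi> w ! i) (\<psi> w ! Suc i)"
    proof -
      fix i assume i: "i < l"
      show "adj G' (\<psi> w ! i) (\<psi> w ! Suc i)"
      proof (cases "C w i")
        case True
        then have "C w (Suc i)" unfolding C_def using set_take_subset_set_take[of "Suc i" "Suc (Suc i)" w] by auto
        then have "\<psi> w ! i = \<sigma> (w!i)" "\<psi> w ! Suc i = \<sigma> (w!Suc i)" using True \<psi>_nth wl i by auto
        then show ?thesis using hom ws i by simp
      next
        case False
        then have e1: "\<psi> w ! i = w!i" using \<psi>_nth wl i by simp
        have e2: "\<psi> w ! Suc i = w!Suc i"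
        proof (cases "C w (Suc i)")
          case True
          have tk: "take (Suc (Suc i)) w = take (Suc i) w @ [w!Suc i]"
            using i wl by (simp add: take_Suc_conv_app_nth)
          then have "w!Suc i = ps!m" using True False by (auto simp: C_def)
          then show ?thesis using fixm wl i by simp
        qed (use \<psi>_nth wl i in simp)
        obtain j where j: "j < m" "w!i = ps!j" using prefix[OF w, of i] False i by (auto simp: C_def)
        have "adj G (ps!j) (w!Suc i)" using ws[OF i] j by simp
        then have "w!Suc i = ps!Suc j \<or> (0<j \<and> w!Suc i = ps!(j-1))" using nbG j km by auto
        moreover have "adj G' (ps!j) (ps!Suc j)" using pathG' j km by simp
        moreover have "0 < j \<Longrightarrow> adj G' (ps!j) (ps!(j-1))"
        proof -
          assume j0: "0 < j"
          then have "Suc (j-1) = j" by simp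
          then have "adj G' (ps!(j-1)) (ps!j)" using pathG'[of "j-1"] j km by (metis less_imp_diff_less less_trans)
          then show ?thesis by (rule adj_sym)
        qed
        ultimately show ?thesis using e1 e2 j by auto
      qed
    qed
    show "\<psi> w \<in> walks G' (ps!0) l" using h st wl \<psi>_len by (simp add: walks_def)
  qed
  have finS: "finite S" using finV by (auto simp: S_def B_def component_def intro: finite_subset)
  have fin': "finite (walks G' (ps!0) l)"
  proof (rule finite_subset[OF _ finite_lists_length_eq[OF finS, of "Suc l"]])
    show "walks G' (ps!0) l \<subseteq> {xs. set xs \<subseteq> S \<and> length xs = Suc l}"
    proof
      fix ws assume ws: "ws \<in> walks G' (ps!0) l"
      then have wl: "length ws = Suc l" and wh: "hd ws = ps!0" and st: "\<And>i. i < l \<Longrightarrow> adj G' (ws!i) (ws!Suc i)"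
        by (auto simp: walks_def)
      have "\<And>i. i < length ws \<Longrightarrow> ws!i \<in> S"
      proof -
        fix i assume i: "i < length ws"
        show "ws!i \<in> S"
        proof (cases i)
          case 0
          have "ws \<noteq> []" using wl by auto
          then have "ws!0 = hd ws" by (simp add: hd_conv_nth)
          then show ?thesis using 0 wh psS[of 0] by simp
        next
          case (Suc j) then show ?thesis using st[of j] i wl adjG' by auto
        qed
      qed
      then show "ws \<in> {xs. set xs \<subseteq> S \<and> length xs = Suc l}" using wl by (auto simp: in_set_conv_nth)
    qed
  qed
  have "card (walks G (ps!0) l) \<le> card (walks G' (ps!0) l)"
    using card_inj_on_le[OF inj _ fin'] maps by blast
  then show ?thesis by (simp add: num_walks_def G_def G'_def S_def)
qed
end
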